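(* Let $G$ be a connected graph with vertex set $\{v_1,\dots,v_n\}$, $n\ge 2$, let $\widehat{G}$ be the graph constructed from $G$ as described in the context, and let $h\geq 4$. Then $\widehat{G}\in[h,2,1]\setminus[h-1,2,1]$ if and only if $\chi(G)=h$.
   Context: Construction of $\widehat{G}$: let $T$ be the star with center $q$ and leaves $y_1,\dots,y_n$. Let $\mathcal{P}$ be the family of paths of $T$ consisting of: for each $1\le i\le n$ a one-vertex path $P_i$ with $V(P_i)=\{y_i\}$; for each $1\le i<j\le n$ with $v_iv_j\in E(G)$ a path $P_{ij}$ with $V(P_{ij})=\{y_i,q,y_j\}$; for each $i$ with $d_G(v_i)=1$ a path $P_{iq}$ with $V(P_{iq})=\{q,y_i\}$. $\widehat{G}$ is the vertex-intersection graph of $\mathcal{P}$. $[h,2,1]$ denotes the class of graphs that are vertex-intersection graphs of a family of paths in a tree of maximum degree at most $h$ (i.e., two vertices adjacent iff their paths share at least one vertex). $\chi$ denotes chromatic number. *)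

theory Defs
  imports Main
begin

definition simple_graph :: "'a set \<Rightarrow> ('a \<Rightarrow> 'a \<Rightarrow> bool) \<Rightarrow> bool" where
  "simple_graph V E \<longleftrightarrow> finite V \<and> (\<forall>u v. E u v \<longrightarrow> u \<in> V \<and> v \<in> V)
     \<and> (\<forall>u v. E u v \<longrightarrow> E v u) \<and> (\<forall>v. \<not> E v v)"

definition connected_graph :: "'a set \<Rightarrow> ('a \<Rightarrow> 'a \<Rightarrow> bool) \<Rightarrow> bool" where
  "connected_graph V E \<longleftrightarrow> (\<forall>u\<in>V. \<forall>v\<in>V. (\<lambda>x y. E x y \<and> x \<in> V \<and> y \<in> V)\<^sup>*\<^sup>* u v)"

definition degree :: "'a set \<Rightarrow> ('a \<Rightarrow> 'a \<Rightarrow> bool) \<Rightarrow> 'a \<Rightarrow> nat" where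
  "degree V E v = card {u \<in> V. E v u}"

definition chromatic_number :: "'a set \<Rightarrow> ('a \<Rightarrow> 'a \<Rightarrow> bool) \<Rightarrow> nat" where
  "chromatic_number V E = (LEAST k. \<exists>c :: 'a \<Rightarrow> nat.
       (\<forall>v\<in>V. c v < k) \<and> (\<forall>u\<in>V. \<forall>v\<in>V. E u v \<longrightarrow> c u \<noteq> c v))"

definition is_walk :: "'a set \<Rightarrow> ('a \<Rightarrow> 'a \<Rightarrow> bool) \<Rightarrow> 'a list \<Rightarrow> bool" where
  "is_walk V E xs \<longleftrightarrow> xs \<noteq> [] \<and> set xs \<subseteq> V \<and>
     (\<forall>i. Suc i < length xs \<longrightarrow> E (xs ! i) (xs ! Suc i))"

definition has_cycle :: "'a set \<Rightarrow> ('a \<Rightarrow> 'a \<Rightarrow> bool) \<Rightarrow> bool" where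
  "has_cycle V E \<longleftrightarrow> (\<exists>xs. length xs \<ge> 3 \<and> distinct xs \<and> is_walk V E xs \<and> E (last xs) (hd xs))"

definition is_tree :: "'a set \<Rightarrow> ('a \<Rightarrow> 'a \<Rightarrow> bool) \<Rightarrow> bool" where
  "is_tree V E \<longleftrightarrow> simple_graph V E \<and> V \<noteq> {} \<and> connected_graph V E \<and> \<not> has_cycle V E"

definition is_path_set :: "'a set \<Rightarrow> ('a \<Rightarrow> 'a \<Rightarrow> bool) \<Rightarrow> 'a set \<Rightarrow> bool" where
  "is_path_set V E P \<longleftrightarrow> (\<exists>xs. distinct xs \<and> is_walk V E xs \<and> P = set xs)"

definition in_VPT_class :: "nat \<Rightarrow> 'a set \<Rightarrow> ('a \<Rightarrow> 'a \<Rightarrow> bool) \<Rightarrow> bool" where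
  "in_VPT_class h V adj \<longleftrightarrow> (\<exists>(TV :: nat set) TE (p :: 'a \<Rightarrow> nat set).
      is_tree TV TE \<and> (\<forall>v\<in>TV. degree TV TE v \<le> h) \<and>
      (\<forall>x\<in>V. is_path_set TV TE (p x)) \<and>
      (\<forall>x\<in>V. \<forall>y\<in>V. x \<noteq> y \<longrightarrow> (adj x y \<longleftrightarrow> p x \<inter> p y \<noteq> {})))"

text \<open>G has vertices 0..n-1 (v_1..v_n). Star T: centre q = None, leaves y_i = Some i.\<close>
datatype hat_vertex = HP nat | HPE nat nat | HPQ nat

fun hat_path :: "hat_vertex \<Rightarrow> nat option set" where
  "hat_path (HP i) = {Some i}"
| "hat_path (HPE i j) = {Some i, None, Some j}"
| "hat_path (HPQ i) = {None, Some i}"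

definition hat_V :: "nat \<Rightarrow> (nat \<Rightarrow> nat \<Rightarrow> bool) \<Rightarrow> hat_vertex set" where
  "hat_V n E = HP ` {..<n} \<union> {HPE i j | i j. i < j \<and> j < n \<and> E i j}
      \<union> {HPQ i | i. i < n \<and> degree {..<n} E i = 1}"

definition hat_adj :: "hat_vertex \<Rightarrow> hat_vertex \<Rightarrow> bool" where
  "hat_adj x y \<longleftrightarrow> x \<noteq> y \<and> hat_path x \<inter> hat_path y \<noteq> {}"

end

theory Submission
  imports Defs
begin


lemma walk_succ: "is_walk V E xs \<longleftrightarrow> xs \<noteq> [] \<and> set xs \<subseteq> V \<and> successively E xs"
  unfolding is_walk_def successively_conv_nth by blast

lemma succ_pre: "successively R (as @ bs) \<Longrightarrow> successively R as"
  by (simp add: successively_append_iff)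

lemma succ_join: "successively R (as @ [w]) \<Longrightarrow> successively R (w # bs) \<Longrightarrow> successively R (as @ w # bs)"
  by (auto simp: successively_append_iff successively_Cons)

locale tr = fixes V :: "'a set" and E :: "'a \<Rightarrow> 'a \<Rightarrow> bool" assumes tree: "is_tree V E"
begin

lemma sym: "E u v \<Longrightarrow> E v u" using tree unfolding is_tree_def simple_graph_def by blast
lemma irr: "\<not> E v v" using tree unfolding is_tree_def simple_graph_def by blast
lemma inV: "E u v \<Longrightarrow> u \<in> V" "E u v \<Longrightarrow> v \<in> V" using tree unfolding is_tree_def simple_graph_def by blast+
lemma fin: "finite V" using tree unfolding is_tree_def simple_graph_def by blast
lemma nocyc: "\<not> has_cycle V E" using tree unfolding is_tree_def by blast

definition spath where "spath xs \<longleftrightarrow> distinct xs \<and> xs \<noteq> [] \<and> set xs \<subseteq> V \<and> successively E xs"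

lemma spath_walk: "spath xs \<longleftrightarrow> distinct xs \<and> is_walk V E xs"
  unfolding spath_def walk_succ by blast

lemma succ_rev: "successively E (rev xs) \<longleftrightarrow> successively E xs"
proof -
  have "successively (\<lambda>x y. E y x) xs = successively E xs"
    by (rule successively_cong) (auto intro: sym)
  then show ?thesis by simp
qed

lemma spath_rev: "spath (rev xs) \<longleftrightarrow> spath xs"
  unfolding spath_def by (simp del: successively_rev add: succ_rev)

lemma uniq: "spath xs \<Longrightarrow> spath ys \<Longrightarrow> hd xs = hd ys \<Longrightarrow> last xs = last ys \<Longrightarrow> xs = ys"
proof (induction xs arbitrary: ys)
  case Nil then show ?case by (simp add: spath_def)
next
  case (Cons x xs')
  obtain ys' where ys: "ys = x # ys'" using Cons.prems
    by (cases ys) (auto simp: spath_def)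
  show ?case
  proof (cases "xs' = []")
    case True
    then have "last ys = x" using Cons.prems by simp
    then have "ys' = []" using Cons.prems(2) ys by (cases "ys' = []") (auto simp: spath_def)
    then show ?thesis using True ys by simp
  next
    case xne: False
    show ?thesis
    proof (cases "ys' = []")
      case True
      then have "last (x#xs') = x" using Cons.prems ys by simp
      then have False using xne Cons.prems(1) by (auto simp: spath_def)
      then show ?thesis ..
    next
      case yne: False
      have sx: "spath xs'" using Cons.prems(1) xne
        by (auto simp: spath_def successively_Cons)
      have sy: "spath ys'" using Cons.prems(2) yne ys
        by (auto simp: spath_def successively_Cons)
      have lst: "last xs' = last ys'" using Cons.prems(4) xne yne ys by simp
      show ?thesis
      proof (cases "hd xs' = hd ys'")
        case True
        then show ?thesis using Cons.IH[OF sx sy True lst] ys by simp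
      next
        case hdne: False
        have "\<exists>w\<in>set xs'. w \<in> set ys'" using lst xne yne
          by (metis last_in_set)
        then obtain us w rs where xs': "xs' = us @ w # rs" and wy: "w \<in> set ys'"
          and us: "\<forall>u\<in>set us. u \<notin> set ys'"
          using split_list_first_prop[of xs' "\<lambda>w. w \<in> set ys'"] by blast
        obtain vs rs' where ys': "ys' = vs @ w # rs'" using wy split_list by metis
        define cyc where "cyc = x # us @ w # rev vs"
        have dx: "distinct (x # us @ w # rs)" using Cons.prems(1) xs' by (simp add: spath_def)
        have dy: "distinct (x # vs @ w # rs')" using Cons.prems(2) ys ys' by (simp add: spath_def)
        have "distinct cyc" unfolding cyc_def using dx dy us ys' by auto
        moreover have "length cyc \<ge> 3"
        proof (cases us)
          case Nil
          then have "w = hd xs'" using xs' by simp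
          then have "vs \<noteq> []" using hdne ys' by auto
          then show ?thesis unfolding cyc_def by (cases vs) auto
        next
          case (Cons a l) then show ?thesis unfolding cyc_def by simp
        qed
        moreover have "set cyc \<subseteq> V" unfolding cyc_def using Cons.prems(1,2) xs' ys ys'
          by (auto simp: spath_def)
        moreover have sc: "successively E (cyc @ [x])"
        proof -
          have a: "successively E ((x # us) @ [w])"
            using Cons.prems(1) xs' succ_pre[of E "(x # us) @ [w]" rs] by (simp add: spath_def)
          have "successively E ((x # vs) @ [w])"
            using Cons.prems(2) ys ys' succ_pre[of E "(x # vs) @ [w]" rs'] by (simp add: spath_def)
          then have "successively E (rev ((x # vs) @ [w]))" by (simp only: succ_rev)
          then have b: "successively E (w # rev vs @ [x])" by simp
          show ?thesis unfolding cyc_def using succ_join[OF a b] by simp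
        qed
        moreover have "successively E cyc" using succ_pre[OF sc] .
        moreover have "E (last cyc) (hd cyc)"
          using sc unfolding successively_append_iff by (simp add: cyc_def)
        ultimately have "has_cycle V E"
          unfolding has_cycle_def walk_succ
          by (rule_tac x=cyc in exI) (auto simp: cyc_def)
        then show ?thesis using nocyc by blast
      qed
    qed
  qed
qed


lemma conn: "connected_graph V E" using tree unfolding is_tree_def by blast

lemma exists_path: assumes "a \<in> V" "b \<in> V" shows "\<exists>xs. spath xs \<and> hd xs = a \<and> last xs = b"
proof -
  have r: "(\<lambda>x y. E x y \<and> x \<in> V \<and> y \<in> V)\<^sup>*\<^sup>* a b" using conn assms unfolding connected_graph_def by blast
  show ?thesis using r
  proof (induction rule: rtranclp_induct)
    case base then show ?case using assms by (rule_tac x="[a]" in exI) (simp add: spath_def)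
  next
    case (step b c)
    then obtain xs where xs: "spath xs" "hd xs = a" "last xs = b" by blast
    show ?case
    proof (cases "c \<in> set xs")
      case True
      then obtain us vs where u: "xs = us @ c # vs" using split_list by metis
      have "spath (us @ [c])" using xs(1) u succ_pre[of E "us @ [c]" vs] by (auto simp: spath_def)
      moreover have "hd (us @ [c]) = a" using xs u by (cases us) auto
      ultimately show ?thesis by (rule_tac x="us @ [c]" in exI) simp
    next
      case False
      have "xs \<noteq> []" using xs by (simp add: spath_def)
      then have "spath (xs @ [c])" using xs step False
        by (auto simp: spath_def successively_append_iff)
      moreover have "hd (xs @ [c]) = a" using xs \<open>xs \<noteq> []\<close> by simp
      ultimately show ?thesis by (rule_tac x="xs @ [c]" in exI) simp
    qed
  qed
qed

definition pth where "pth a b = (THE xs. spath xs \<and> hd xs = a \<and> last xs = b)"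

lemma pth: assumes "a \<in> V" "b \<in> V" shows "spath (pth a b)" "hd (pth a b) = a" "last (pth a b) = b"
proof -
  obtain xs where P: "spath xs" "hd xs = a" "last xs = b" using exists_path[OF assms] by blast
  have ex1: "\<exists>!ys. spath ys \<and> hd ys = a \<and> last ys = b"
  proof (rule ex1I[of _ xs])
    show "spath xs \<and> hd xs = a \<and> last xs = b" using P by simp
    fix ys assume "spath ys \<and> hd ys = a \<and> last ys = b"
    then show "ys = xs" using uniq P by metis
  qed
  have "spath (pth a b) \<and> hd (pth a b) = a \<and> last (pth a b) = b"
    unfolding pth_def using theI'[OF ex1] .
  then show "spath (pth a b)" "hd (pth a b) = a" "last (pth a b) = b" by auto
qed

lemma spath_ne: "spath xs \<Longrightarrow> xs \<noteq> []" by (simp add: spath_def)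
lemma spath_set: "spath xs \<Longrightarrow> set xs \<subseteq> V" by (simp add: spath_def)

lemma pth_eq: assumes "spath xs" shows "pth (hd xs) (last xs) = xs"
proof -
  have "hd xs \<in> V" "last xs \<in> V" using spath_ne[OF assms] spath_set[OF assms] by auto
  note p = pth[OF this]
  show ?thesis using uniq[OF p(1) assms] p(2,3) by simp
qed

lemma pth_eqI: "spath xs \<Longrightarrow> hd xs = a \<Longrightarrow> last xs = b \<Longrightarrow> pth a b = xs"
  using pth_eq by metis

lemma pth_rev: assumes "a \<in> V" "b \<in> V" shows "pth b a = rev (pth a b)"
proof -
  note p = pth[OF assms]
  have "spath (rev (pth a b))" using p(1) spath_rev by simp
  moreover have "pth a b \<noteq> []" using p(1) spath_ne by blast
  ultimately show ?thesis using p(2,3) by (intro pth_eqI) (simp_all add: hd_rev last_rev)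
qed

lemma set_pth_sym: "a \<in> V \<Longrightarrow> b \<in> V \<Longrightarrow> set (pth b a) = set (pth a b)"
  using pth_rev[of a b] by simp

lemma sub: assumes "spath xs" "i \<le> j" "j < length xs"
  shows "pth (xs ! i) (xs ! j) = drop i (take (Suc j) xs)"
proof (rule pth_eqI)
  let ?ys = "drop i (take (Suc j) xs)"
  have len: "length ?ys = Suc j - i" using assms by simp
  have nth: "\<And>t. t < length ?ys \<Longrightarrow> ?ys ! t = xs ! (i + t)" using assms by simp
  have "distinct ?ys" using assms(1) by (simp add: spath_def distinct_take distinct_drop)
  moreover have "?ys \<noteq> []" using len assms by auto
  moreover have "set ?ys \<subseteq> V" using spath_set[OF assms(1)]
    by (meson order_trans set_drop_subset set_take_subset)
  moreover have "successively E ?ys"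
    unfolding successively_conv_nth
  proof (intro allI impI)
    fix t assume "Suc t < length ?ys"
    then show "E (?ys ! t) (?ys ! Suc t)" using nth assms(1) len
      by (simp add: spath_def successively_conv_nth)
  qed
  ultimately show "spath ?ys" by (simp add: spath_def)
  show "hd ?ys = xs ! i" using assms by (simp add: hd_drop_conv_nth)
  show "last ?ys = xs ! j" using assms \<open>?ys \<noteq> []\<close> len nth[of "j - i"]
    by (simp add: last_conv_nth)
qed

lemma betw: assumes "spath xs" "i \<le> j" "j \<le> k" "k < length xs"
  shows "xs ! j \<in> set (pth (xs ! i) (xs ! k))"
proof -
  have "xs ! j = drop i (take (Suc k) xs) ! (j - i)" using assms by simp
  moreover have "j - i < length (drop i (take (Suc k) xs))" using assms by simp
  ultimately show ?thesis using sub[OF assms(1) _ assms(4)] assms by (metis nth_mem le_trans)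
qed

lemma betw2: assumes "spath xs" "i < length xs" "j < length xs" "k < length xs" "i \<le> j \<and> j \<le> k \<or> k \<le> j \<and> j \<le> i"
  shows "xs ! j \<in> set (pth (xs ! i) (xs ! k))"
proof -
  have V: "xs ! i \<in> V" "xs ! k \<in> V" using assms spath_set by (meson nth_mem subsetD)+
  show ?thesis using assms(5)
  proof
    assume "i \<le> j \<and> j \<le> k" then show ?thesis using betw assms by blast
  next
    assume "k \<le> j \<and> j \<le> i" then show ?thesis using betw[of xs k j i] assms set_pth_sym[OF V] by blast
  qed
qed

definition cvx where "cvx S \<longleftrightarrow> S \<subseteq> V \<and> (\<forall>a\<in>S. \<forall>b\<in>S. set (pth a b) \<subseteq> S)"

lemma cvx_path: assumes "spath xs" shows "cvx (set xs)"
  unfolding cvx_def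
proof (intro conjI ballI)
  show "set xs \<subseteq> V" using assms spath_set by blast
  fix a b assume "a \<in> set xs" "b \<in> set xs"
  then obtain i j where ij: "i < length xs" "j < length xs" "a = xs ! i" "b = xs ! j"
    by (metis in_set_conv_nth)
  have V: "a \<in> V" "b \<in> V" using \<open>set xs \<subseteq> V\<close> \<open>a \<in> set xs\<close> \<open>b \<in> set xs\<close> by auto
  have sd: "set (drop i (take (Suc j) xs)) \<subseteq> set xs" for i j
    by (meson order_trans set_drop_subset set_take_subset)
  then show "set (pth a b) \<subseteq> set xs"
  proof (cases "i \<le> j")
    case True then show ?thesis using sub[OF assms True ij(2)] ij sd by simp
  next
    case False
    then have "pth b a = drop j (take (Suc i) xs)" using sub[OF assms _ ij(1)] ij by simp
    then show ?thesis using set_pth_sym[OF V] sd by metis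
  qed
qed

lemma cat: assumes "spath xs" "spath ys" "last xs = hd ys" "set xs \<inter> set ys \<subseteq> {hd ys}"
  shows "spath (xs @ tl ys)" "hd (xs @ tl ys) = hd xs" "last (xs @ tl ys) = last ys"
proof -
  have ne: "xs \<noteq> []" "ys \<noteq> []" using assms spath_ne by auto
  then have ys: "ys = hd ys # tl ys" by simp
  have xs: "xs = butlast xs @ [hd ys]" using ne assms(3) by (metis append_butlast_last_id)
  have sy: "set ys = insert (hd ys) (set (tl ys))" using ys by (metis list.simps(15))
  have d2: "distinct (hd ys # tl ys)" using assms(2) ys by (metis spath_def)
  have "set xs \<inter> set (tl ys) = {}" using assms(4) sy d2 by auto
  then have "distinct (xs @ tl ys)" using assms(1) d2 by (simp add: spath_def)
  moreover have "set (xs @ tl ys) \<subseteq> V" using spath_set[OF assms(1)] spath_set[OF assms(2)] sy by auto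
  moreover have "successively E (xs @ tl ys)"
  proof -
    have "successively E (butlast xs @ [hd ys])" using assms(1) xs by (metis spath_def)
    moreover have "successively E (hd ys # tl ys)" using assms(2) ys by (metis spath_def)
    ultimately have "successively E (butlast xs @ hd ys # tl ys)" by (rule succ_join)
    then show ?thesis using xs by (metis append.assoc append_Cons append_Nil)
  qed
  ultimately show "spath (xs @ tl ys)" using ne by (simp add: spath_def)
  show "hd (xs @ tl ys) = hd xs" using ne by simp
  show "last (xs @ tl ys) = last ys" using ne assms(3)
    by (metis append.right_neutral last_ConsL last_appendR last_tl list.collapse)
qed

lemma median: assumes "a \<in> V" "b \<in> V" "c \<in> V"
  shows "\<exists>m. m \<in> set (pth a b) \<and> m \<in> set (pth b c) \<and> m \<in> set (pth a c)"
proof -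
  define xs where "xs = pth a c"
  note px = pth[OF assms(1,3), folded xs_def]
  define P where "P = set (pth a b)"
  note pb = pth[OF assms(1,2)]
  define K where "K = {i. i < length xs \<and> xs ! i \<in> P}"
  have ne: "xs \<noteq> []" using px spath_ne by blast
  have "0 \<in> K" unfolding K_def P_def using ne px pb spath_ne[OF pb(1)]
    by (simp add: hd_conv_nth[symmetric]) (metis hd_in_set)
  have fK: "finite K" unfolding K_def by simp
  define k where "k = Max K"
  have kK: "k \<in> K" unfolding k_def using fK \<open>0 \<in> K\<close> Max_in by blast
  have kmax: "\<And>i. i \<in> K \<Longrightarrow> i \<le> k" unfolding k_def using fK by simp
  define m where "m = xs ! k"
  have kl: "k < length xs" "m \<in> P" using kK unfolding K_def m_def by auto
  have mV: "m \<in> V" using kl spath_set[OF px(1)] m_def by auto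
  have ys2: "pth m c = drop k xs" using sub[OF px(1), of k "length xs - 1"] px ne kl
    by (simp add: last_conv_nth m_def)
  have cP: "cvx P" unfolding P_def using cvx_path pb(1) by blast
  have bP: "b \<in> P" unfolding P_def using pb spath_ne[OF pb(1)] by (metis last_in_set)
  have ys1: "set (pth b m) \<subseteq> P" using cP bP kl(2) unfolding cvx_def by blast
  have dis: "set (pth b m) \<inter> set (drop k xs) \<subseteq> {hd (drop k xs)}"
  proof
    fix x assume x: "x \<in> set (pth b m) \<inter> set (drop k xs)"
    then obtain t where t: "t < length (drop k xs)" "x = drop k xs ! t" by (metis IntD2 in_set_conv_nth)
    have "x \<in> P" using x ys1 by blast
    then have "k + t \<in> K" using t unfolding K_def by simp
    then have "t = 0" using kmax by fastforce
    then show "x \<in> {hd (drop k xs)}" using t by (simp add: hd_conv_nth)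
  qed
  have hdd: "hd (drop k xs) = m" using kl m_def by (simp add: hd_drop_conv_nth)
  note pbm = pth[OF assms(2) mV]
  note pmc = pth[OF mV assms(3)]
  have c: "spath (pth b m @ tl (pth m c))" "hd (pth b m @ tl (pth m c)) = b" "last (pth b m @ tl (pth m c)) = c"
    using cat[OF pbm(1) pmc(1)] pbm pmc dis ys2 hdd by auto
  have "pth b c = pth b m @ tl (pth m c)" using pth_eqI[OF c] .
  then have "m \<in> set (pth b c)" using pbm spath_ne[OF pbm(1)] by (metis Un_iff last_in_set set_append)
  moreover have "m \<in> set (pth a c)" using kl m_def xs_def by simp
  ultimately show ?thesis using kl(2) P_def by blast
qed

lemma cvx_int: "cvx A \<Longrightarrow> cvx B \<Longrightarrow> cvx (A \<inter> B)" unfolding cvx_def by blast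

lemma helly3: assumes "cvx A" "cvx B" "cvx C" "A \<inter> B \<noteq> {}" "B \<inter> C \<noteq> {}" "A \<inter> C \<noteq> {}"
  shows "A \<inter> B \<inter> C \<noteq> {}"
proof -
  obtain a where a: "a \<in> B" "a \<in> C" using assms by blast
  obtain b where b: "b \<in> A" "b \<in> C" using assms by blast
  obtain c where c: "c \<in> A" "c \<in> B" using assms by blast
  have V: "a \<in> V" "b \<in> V" "c \<in> V" using assms a b c unfolding cvx_def by auto
  obtain m where m: "m \<in> set (pth a b)" "m \<in> set (pth b c)" "m \<in> set (pth a c)" using median[OF V] by blast
  have "m \<in> C" using m(1) a b assms(3) unfolding cvx_def by blast
  moreover have "m \<in> A" using m(2) b c assms(1) unfolding cvx_def by blast
  moreover have "m \<in> B" using m(3) a c assms(2) unfolding cvx_def by blast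
  ultimately show ?thesis by blast
qed

lemma helly_n: "finite F \<Longrightarrow> card F = N \<Longrightarrow> F \<noteq> {} \<Longrightarrow> (\<forall>A\<in>F. cvx A) \<Longrightarrow> (\<forall>A\<in>F. \<forall>B\<in>F. A \<inter> B \<noteq> {})
   \<Longrightarrow> \<Inter>F \<noteq> {}"
proof (induction N arbitrary: F rule: less_induct)
  case (less N)
  obtain A where A: "A \<in> F" using less.prems by blast
  define F' where "F' = F - {A}"
  show ?case
  proof (cases "F' = {}")
    case True
    then have "F = {A}" using A F'_def by blast
    then show ?thesis using less.prems by auto
  next
    case False
    define G where "G = (\<lambda>B. A \<inter> B) ` F'"
    have fG: "finite G" unfolding G_def F'_def using less.prems by simp
    have c1: "card G \<le> card F'" unfolding G_def by (rule card_image_le) (simp add: F'_def less.prems(1))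
    have "card F' < card F" unfolding F'_def using less.prems(1) A by (rule card_Diff1_less)
    then have cG: "card G < N" using c1 less.prems(2) by simp
    have "\<Inter>G \<noteq> {}"
    proof (rule less.IH[OF cG fG refl])
      show "G \<noteq> {}" using False G_def by simp
      show "\<forall>X\<in>G. cvx X" unfolding G_def F'_def using less.prems A cvx_int by auto
      show "\<forall>X\<in>G. \<forall>Y\<in>G. X \<inter> Y \<noteq> {}"
      proof (intro ballI)
        fix X Y assume "X \<in> G" "Y \<in> G"
        then obtain B C where BC: "B \<in> F" "C \<in> F" "X = A \<inter> B" "Y = A \<inter> C" unfolding G_def F'_def by auto
        have "A \<inter> B \<inter> C \<noteq> {}"
        proof (rule helly3)
          show "cvx A" "cvx B" "cvx C" using less.prems(4) A BC by blast+
          show "A \<inter> B \<noteq> {}" "B \<inter> C \<noteq> {}" "A \<inter> C \<noteq> {}" using less.prems(5) A BC by blast+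
        qed
        moreover have "X \<inter> Y = A \<inter> B \<inter> C" using BC by blast
        ultimately show "X \<inter> Y \<noteq> {}" by simp
      qed
    qed
    moreover have "\<Inter>G \<subseteq> \<Inter>F"
    proof
      fix x assume x: "x \<in> \<Inter>G"
      obtain B where "B \<in> F'" using False by blast
      then have "x \<in> A" using x unfolding G_def by (auto split: if_splits)
      moreover have "x \<in> B" if "B \<in> F'" for B using x that unfolding G_def by (auto split: if_splits)
      ultimately show "x \<in> \<Inter>F" unfolding F'_def by blast
    qed
    ultimately show ?thesis by blast
  qed
qed

lemma helly: "finite F \<Longrightarrow> F \<noteq> {} \<Longrightarrow> (\<forall>A\<in>F. cvx A) \<Longrightarrow> (\<forall>A\<in>F. \<forall>B\<in>F. A \<inter> B \<noteq> {})
   \<Longrightarrow> \<exists>z. \<forall>A\<in>F. z \<in> A"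
  using helly_n[OF _ refl] by (metis Inter_iff ex_in_conv)

lemma gate: assumes "cvx S" "s0 \<in> S" "z \<in> V" "z \<notin> S"
  shows "\<exists>g\<in>S. \<forall>s\<in>S. g \<in> set (pth z s)"
proof -
  have s0V: "s0 \<in> V" using assms unfolding cvx_def by blast
  define xs where "xs = pth z s0"
  note px = pth[OF assms(3) s0V, folded xs_def]
  have ne: "xs \<noteq> []" using px spath_ne by blast
  define K where "K = {i. i < length xs \<and> xs ! i \<in> S}"
  have "length xs - 1 \<in> K" unfolding K_def using ne px assms(2) by (simp add: last_conv_nth)
  then have Kne: "K \<noteq> {}" by blast
  define k where "k = Least (\<lambda>i. i \<in> K)"
  have kK: "k \<in> K" unfolding k_def using Kne LeastI_ex by (metis ex_in_conv)
  have kmin: "\<And>i. i \<in> K \<Longrightarrow> k \<le> i" unfolding k_def by (simp add: Least_le)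
  define g where "g = xs ! k"
  have kl: "k < length xs" "g \<in> S" using kK unfolding K_def g_def by auto
  have gV: "g \<in> V" using kl assms(1) unfolding cvx_def by blast
  have t: "pth z g = take (Suc k) xs" using sub[OF px(1) _ kl(1), of 0] px ne g_def
    by (simp add: hd_conv_nth)
  show ?thesis
  proof (intro bexI[OF _ kl(2)] ballI)
    fix s assume s: "s \<in> S"
    have sV: "s \<in> V" using s assms unfolding cvx_def by blast
    note pzg = pth[OF assms(3) gV]
    note pgs = pth[OF gV sV]
    have inS: "set (pth g s) \<subseteq> S" using assms(1) kl s unfolding cvx_def by blast
    have dis: "set (pth z g) \<inter> set (pth g s) \<subseteq> {hd (pth g s)}"
    proof
      fix x assume x: "x \<in> set (pth z g) \<inter> set (pth g s)"
      then obtain t where tt: "t < length (take (Suc k) xs)" "x = take (Suc k) xs ! t"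
        using t by (metis IntD1 in_set_conv_nth)
      have "x \<in> S" using x inS by blast
      then have "t \<in> K" using tt unfolding K_def by auto
      then have "t = k" using kmin tt by fastforce
      then show "x \<in> {hd (pth g s)}" using tt pgs g_def by simp
    qed
    have c: "spath (pth z g @ tl (pth g s))" "hd (pth z g @ tl (pth g s)) = z" "last (pth z g @ tl (pth g s)) = s"
      using cat[OF pzg(1) pgs(1) _ dis] pzg pgs by auto
    have "pth z s = pth z g @ tl (pth g s)" using pth_eqI[OF c] .
    then show "g \<in> set (pth z s)" using pzg spath_ne[OF pzg(1)] by (metis Un_iff last_in_set set_append)
  qed
qed

lemma nb_edge: assumes "z \<in> V" "a \<in> V" "a \<noteq> z" shows "E z (pth z a ! 1)"
proof -
  note p = pth[OF assms(1,2)]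
  have "length (pth z a) \<noteq> 1" using p assms(3)
    by (metis One_nat_def hd_conv_nth last_conv_nth length_0_conv zero_neq_one diff_Suc_1)
  moreover have "pth z a \<noteq> []" using p spath_ne by blast
  ultimately have "Suc 0 < length (pth z a)" by (cases "pth z a") auto
  then show ?thesis using p(1,2) unfolding spath_def successively_conv_nth
    by (metis One_nat_def hd_conv_nth list.size(3) not_less0)
qed

lemma nb_diff: assumes "z \<in> set (pth a b)" "a \<in> V" "b \<in> V" "a \<noteq> z" "b \<noteq> z"
  shows "pth z a ! 1 \<noteq> pth z b ! 1"
proof -
  define xs where "xs = pth a b"
  note p = pth[OF assms(2,3), folded xs_def]
  obtain k where k: "k < length xs" "xs ! k = z" using assms(1) xs_def by (metis in_set_conv_nth)
  have ne: "xs \<noteq> []" using p spath_ne by blast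
  have k0: "k \<noteq> 0" using k assms(4) p ne by (metis hd_conv_nth)
  have k1: "k \<noteq> length xs - 1" using k assms(5) p ne by (metis last_conv_nth)
  have zV: "z \<in> V" using k p spath_set by (metis nth_mem subsetD)
  have "pth a z = take (Suc k) xs" using sub[OF p(1) _ k(1), of 0] k p ne by (simp add: hd_conv_nth)
  then have e1: "pth z a = rev (take (Suc k) xs)" using pth_rev[OF assms(2) zV] by simp
  have "pth z b = drop k xs" using sub[OF p(1) _ , of k "length xs - 1"] k p ne
    by (simp add: last_conv_nth)
  then have "pth z b ! 1 = xs ! (Suc k)" using k k1 by simp
  moreover have "pth z a ! 1 = xs ! (k - 1)" using e1 k k0 by (simp add: rev_nth)
  moreover have "distinct xs" using p spath_def by blast
  ultimately show ?thesis using k k0 k1 by (simp add: nth_eq_iff_index_eq)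
qed

end



definition isP :: "hat_vertex \<Rightarrow> bool" where "isP x = (case x of HP _ \<Rightarrow> True | _ \<Rightarrow> False)"

lemma adj_simps[simp]:
  "hat_adj (HP i) (HPE a b) \<longleftrightarrow> i = a \<or> i = b"
  "hat_adj (HP i) (HPQ a) \<longleftrightarrow> i = a"
  "hat_adj (HP i) (HP j) \<longleftrightarrow> False"
  by (auto simp: hat_adj_def)

lemma None_in: "\<not> isP x \<Longrightarrow> None \<in> hat_path x"
  by (cases x) (auto simp: isP_def)

lemma clique_adj: "\<not> isP x \<Longrightarrow> \<not> isP y \<Longrightarrow> x \<noteq> y \<Longrightarrow> hat_adj x y"
  unfolding hat_adj_def using None_in by blast

lemma finite_hat: "finite (hat_V n E)"
proof -
  have "{HPE i j | i j. i < j \<and> j < n \<and> E i j} \<subseteq> (\<lambda>(i,j). HPE i j) ` ({..<n} \<times> {..<n})" by auto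
  moreover have "{HPQ i | i. i < n \<and> degree {..<n} E i = 1} \<subseteq> HPQ ` {..<n}" by auto
  ultimately show ?thesis unfolding hat_V_def by (meson finite_Un finite_SigmaI finite_imageI finite_lessThan finite_subset)
qed

locale gr = fixes n :: nat and E :: "nat \<Rightarrow> nat \<Rightarrow> bool"
  assumes n2: "n \<ge> 2" and sg: "simple_graph {..<n} E" and cg: "connected_graph {..<n} E"
begin

lemma symE: "E u v \<Longrightarrow> E v u" using sg unfolding simple_graph_def by blast
lemma irrE: "\<not> E v v" using sg unfolding simple_graph_def by blast
lemma inE: "E u v \<Longrightarrow> u < n \<and> v < n" using sg unfolding simple_graph_def by blast

lemma nbr: assumes "i < n" shows "\<exists>j. E i j"
proof -
  obtain j where j: "j < n" "j \<noteq> i" using n2 assms by (metis One_nat_def Suc_1 Suc_le_lessD less_Suc_eq_0_disj zero_less_Suc neq0_conv less_trans_Suc)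
  have "(\<lambda>x y. E x y \<and> x \<in> {..<n} \<and> y \<in> {..<n})\<^sup>*\<^sup>* i j" using cg assms j unfolding connected_graph_def by blast
  then show ?thesis using j(2) by (cases rule: converse_rtranclpE) auto
qed

lemma edge_in: "E i j \<Longrightarrow> HPE (min i j) (max i j) \<in> hat_V n E"
  unfolding hat_V_def using inE irrE symE
  by (cases "i < j") (auto simp: min_def max_def intro!: exI[of _ "min i j"])

lemma sep: assumes "E i j" shows "\<exists>y\<in>hat_V n E. \<not> isP y \<and> hat_adj (HP j) y \<and> \<not> hat_adj (HP i) y"
proof (cases "\<exists>l. l \<noteq> i \<and> E j l")
  case True
  then obtain l where l: "l \<noteq> i" "E j l" by blast
  have "i \<noteq> j" using assms irrE by blast
  then show ?thesis using edge_in[OF l(2)] l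
    by (intro bexI[of _ "HPE (min j l) (max j l)"]) (auto simp: isP_def min_def max_def)
next
  case False
  have "{u \<in> {..<n}. E j u} = {i}" using False assms symE inE by auto
  then have "degree {..<n} E j = 1" unfolding degree_def by simp
  moreover have "j < n" using assms inE by blast
  ultimately have "HPQ j \<in> hat_V n E" unfolding hat_V_def by blast
  moreover have "i \<noteq> j" using assms irrE by blast
  ultimately show ?thesis by (intro bexI[of _ "HPQ j"]) (auto simp: isP_def)
qed

lemma HP_in: "i < n \<Longrightarrow> HP i \<in> hat_V n E" unfolding hat_V_def by blast

end



lemma card_below: assumes "finite N" "w \<in> N" shows "card {u\<in>N. u < (w::nat)} < card N"
proof (rule psubset_card_mono)
  show "finite N" by fact
  show "{u\<in>N. u < w} \<subset> N" using assms(2) by blast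
qed

lemma card_below_inj: assumes "finite N" "w1 \<in> N" "w2 \<in> N" "w1 \<noteq> (w2::nat)"
  shows "card {u\<in>N. u < w1} \<noteq> card {u\<in>N. u < w2}"
proof -
  have "card {u\<in>N. u < w1} < card {u\<in>N. u < w2}" if "w1 < w2" "w1 \<in> N" for w1 w2
  proof (rule psubset_card_mono)
    show "finite {u\<in>N. u < w2}" using assms(1) by simp
    show "{u\<in>N. u < w1} \<subset> {u\<in>N. u < w2}" using that by auto
  qed
  note h = this
  show ?thesis
  proof (cases "w1 < w2")
    case True then show ?thesis using h[of w1 w2] assms(2) by simp
  next
    case False then have "w2 < w1" using assms(4) by simp
    then show ?thesis using h[of w2 w1] assms(3) by simp
  qed
qed

context gr begin

lemma upper: assumes "in_VPT_class k (hat_V n E) hat_adj" shows "chromatic_number {..<n} E \<le> k"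
proof -
  obtain TV :: "nat set" and TE p where T: "is_tree TV TE" and deg: "\<forall>v\<in>TV. degree TV TE v \<le> k"
    and ps: "\<forall>x\<in>hat_V n E. is_path_set TV TE (p x)"
    and ad: "\<forall>x\<in>hat_V n E. \<forall>y\<in>hat_V n E. x \<noteq> y \<longrightarrow> (hat_adj x y \<longleftrightarrow> p x \<inter> p y \<noteq> {})"
    using assms unfolding in_VPT_class_def by blast
  interpret tr TV TE by (rule tr.intro[OF T])
  have cv: "cvx (p x)" "p x \<noteq> {}" if xin: "x \<in> hat_V n E" for x
  proof -
    obtain xs where xs: "distinct xs" "is_walk TV TE xs" "p x = set xs" using ps[rule_format, OF xin] unfolding is_path_set_def by blast
    then have sp: "spath xs" by (simp add: spath_walk)
    show "cvx (p x)" using cvx_path[OF sp] xs(3) by simp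
    show "p x \<noteq> {}" using spath_ne[OF sp] xs(3) by simp
  qed
  have spx: "\<exists>xs. spath xs \<and> p x = set xs" if xin: "x \<in> hat_V n E" for x
  proof -
    obtain xs where xs: "distinct xs" "is_walk TV TE xs" "p x = set xs" using ps[rule_format, OF xin] unfolding is_path_set_def by blast
    then have sp: "spath xs" by (simp add: spath_walk)
    then show ?thesis using xs(3) by blast
  qed
  define C where "C = {x\<in>hat_V n E. \<not> isP x}"
  have "\<exists>z. \<forall>A\<in>p ` C. z \<in> A"
  proof (rule helly)
    show "finite (p ` C)" unfolding C_def using finite_hat by simp
    obtain j where j0: "E 0 j" using nbr n2 by fastforce
    have "HPE (min 0 j) (max 0 j) \<in> C" unfolding C_def using edge_in[OF j0] by (simp add: isP_def)
    then show "p ` C \<noteq> {}" by blast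
    show "\<forall>A\<in>p ` C. cvx A" using cv unfolding C_def by blast
    show "\<forall>A\<in>p ` C. \<forall>B\<in>p ` C. A \<inter> B \<noteq> {}"
    proof (intro ballI)
      fix A B assume "A \<in> p ` C" "B \<in> p ` C"
      then obtain x y where xy: "x \<in> C" "y \<in> C" "A = p x" "B = p y" by blast
      show "A \<inter> B \<noteq> {}"
      proof (cases "x = y")
        case True then show ?thesis using cv xy unfolding C_def by auto
      next
        case False
        have "x \<in> hat_V n E" "y \<in> hat_V n E" "hat_adj x y" using clique_adj[OF _ _ False] xy unfolding C_def by auto
        then show ?thesis using ad False xy(3,4) by blast
      qed
    qed
  qed
  then obtain z where z: "\<And>x. x \<in> C \<Longrightarrow> z \<in> p x" by blast
  have zV: "z \<in> TV"
  proof -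
    obtain j where j0: "E 0 j" using nbr n2 by fastforce
    have "HPE (min 0 j) (max 0 j) \<in> C" unfolding C_def using edge_in[OF j0] by (simp add: isP_def)
    then show ?thesis using z cv unfolding cvx_def C_def by blast
  qed
  have notz: "z \<notin> p (HP i)" if iin: "i < n" for i
  proof
    assume zi: "z \<in> p (HP i)"
    obtain j where "E i j" using nbr iin by blast
    then obtain y where y: "y \<in> hat_V n E" "\<not> isP y" "\<not> hat_adj (HP i) y" using sep by blast
    have "y \<in> C" using y C_def by blast
    then have "z \<in> p y" using z by blast
    moreover have "HP i \<noteq> y" using y by (auto simp: isP_def)
    ultimately show False using ad y zi HP_in[OF iin] by blast
  qed
  have "\<exists>g. g \<in> p (HP i) \<and> (\<forall>s\<in>p (HP i). g \<in> set (pth z s))" if iin: "i < n" for i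
    using gate[OF cv(1)[OF HP_in[OF iin]] _ zV notz[OF iin]] cv(2)[OF HP_in[OF iin]] by blast
  then obtain g where g: "\<And>i. i < n \<Longrightarrow> g i \<in> p (HP i)"
    and gg: "\<And>i s. i < n \<Longrightarrow> s \<in> p (HP i) \<Longrightarrow> g i \<in> set (pth z s)" by metis
  have gV: "g i \<in> TV" "g i \<noteq> z" if iin: "i < n" for i
    using g[OF iin] cv(1)[OF HP_in[OF iin]] notz[OF iin] unfolding cvx_def by auto
  have gin: "g i \<in> p x" if hx: "i < n" "x \<in> C" "hat_adj (HP i) x" for i x
  proof -
    have "HP i \<noteq> x" using hx unfolding C_def by (auto simp: isP_def)
    then obtain s where s: "s \<in> p (HP i)" "s \<in> p x" using ad hx HP_in[OF hx(1)] unfolding C_def by blast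
    have "set (pth z s) \<subseteq> p x" using cv(1)[of x] hx z s unfolding C_def cvx_def by blast
    then show ?thesis using gg[OF hx(1) s(1)] by blast
  qed
  have key: "g i \<notin> set (pth z (g j))" if eij: "E i j" for i j
  proof
    assume gi: "g i \<in> set (pth z (g j))"
    have ij: "i < n" "j < n" using inE eij by auto
    obtain y where y: "y \<in> hat_V n E" "\<not> isP y" "hat_adj (HP j) y" "\<not> hat_adj (HP i) y" using sep[OF eij] by blast
    have yC: "y \<in> C" using y C_def by blast
    have "g j \<in> p y" using gin[OF ij(2) yC y(3)] .
    then have "set (pth z (g j)) \<subseteq> p y" using cv(1)[of y] y z[OF yC] unfolding cvx_def by blast
    then have "g i \<in> p y" using gi by blast
    moreover have "HP i \<noteq> y" using y by (auto simp: isP_def)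
    ultimately show False using ad y g[OF ij(1)] HP_in[OF ij(1)] by blast
  qed
  define N where "N = {u\<in>TV. TE z u}"
  have fN: "finite N" unfolding N_def using fin by simp
  have cN: "card N \<le> k" using deg zV unfolding N_def degree_def by blast
  define col where "col i = card {u\<in>N. u < pth z (g i) ! 1}" for i
  have nbN: "pth z (g i) ! 1 \<in> N" if "i < n" for i
    using nb_edge[OF zV gV[OF that]] inV unfolding N_def by blast
  have colk: "\<forall>v\<in>{..<n}. col v < k" using card_below[OF fN nbN] cN unfolding col_def
    by (meson le_trans lessThan_iff not_le)
  have colp: "\<forall>u\<in>{..<n}. \<forall>v\<in>{..<n}. E u v \<longrightarrow> col u \<noteq> col v"
  proof (intro ballI impI)
    fix i j assume ij: "i \<in> {..<n}" "j \<in> {..<n}" and e: "E i j"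
    define x where "x = HPE (min i j) (max i j)"
    have xC: "x \<in> C" unfolding C_def x_def using edge_in[OF e] by (simp add: isP_def)
    have ai: "hat_adj (HP i) x" "hat_adj (HP j) x" unfolding x_def by (auto simp: min_def max_def)
    have gi: "g i \<in> p x" "g j \<in> p x" using gin xC ai ij by auto
    obtain xs where xs: "spath xs" "p x = set xs" using spx xC unfolding C_def by blast
    obtain a b c where abc: "a < length xs" "b < length xs" "c < length xs" "xs ! a = z" "xs ! b = g i" "xs ! c = g j"
      using xs gi z[OF xC] by (metis in_set_conv_nth)
    have c1: "\<not> (a \<le> b \<and> b \<le> c \<or> c \<le> b \<and> b \<le> a)"
      using betw2[OF xs(1) abc(1,2,3)] abc key[OF e] by auto
    have c2: "\<not> (a \<le> c \<and> c \<le> b \<or> b \<le> c \<and> c \<le> a)"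
      using betw2[OF xs(1) abc(1,3,2)] abc key[OF symE[OF e]] by auto
    then have "b \<le> a \<and> a \<le> c \<or> c \<le> a \<and> a \<le> b" using c1 by linarith
    then have "z \<in> set (pth (g i) (g j))" using betw2[OF xs(1) abc(2,1,3)] abc by auto
    then have "pth z (g i) ! 1 \<noteq> pth z (g j) ! 1" using nb_diff gV ij by auto
    then show "col i \<noteq> col j" unfolding col_def using card_below_inj[OF fN nbN nbN] ij by auto
  qed
  show ?thesis unfolding chromatic_number_def
    by (rule Least_le) (use colk colp in blast)
qed

end



lemma acyc_par:
  fixes TE :: "nat \<Rightarrow> nat \<Rightarrow> bool"
  assumes "\<And>u v. TE u v \<Longrightarrow> (u = f v \<and> u < v) \<or> (v = f u \<and> v < u)"
  shows "\<not> has_cycle V TE"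
proof
  assume "has_cycle V TE"
  then obtain xs where xs: "length xs \<ge> 3" "distinct xs" "successively TE xs" "TE (last xs) (hd xs)"
    unfolding has_cycle_def walk_succ by blast
  define L where "L = length xs"
  have ne: "xs \<noteq> []" using xs by auto
  define m where "m = Max (set xs)"
  have "m \<in> set xs" unfolding m_def using ne by simp
  then obtain q where q: "q < L" "xs ! q = m" unfolding L_def by (metis in_set_conv_nth)
  have mx: "\<And>t. t < L \<Longrightarrow> xs ! t \<le> m" unfolding m_def L_def by simp
  have edge: "\<And>a b. a < L \<Longrightarrow> b < L \<Longrightarrow> a = Suc b \<or> (b = L - 1 \<and> a = 0) \<Longrightarrow> TE (xs ! b) (xs ! a)"
  proof -
    fix a b assume ab: "a < L" "b < L" "a = Suc b \<or> (b = L - 1 \<and> a = 0)"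
    from ab(3) show "TE (xs ! b) (xs ! a)"
    proof
      assume "a = Suc b" then show ?thesis using xs(3) ab unfolding successively_conv_nth L_def by blast
    next
      assume "b = L - 1 \<and> a = 0" then show ?thesis using xs(4) ne unfolding L_def by (simp add: last_conv_nth hd_conv_nth)
    qed
  qed
  have par: "xs ! t = f m" if "t < L" "TE (xs ! t) m \<or> TE m (xs ! t)" for t
  proof -
    have "xs ! t \<le> m" using mx that by blast
    then show ?thesis using that(2) assms by fastforce
  qed
  define a where "a = (if q = 0 then L - 1 else q - 1)"
  define b where "b = (if q = L - 1 then 0 else Suc q)"
  have aL: "a < L" "b < L" using q unfolding a_def b_def by auto
  have "TE (xs ! a) m" using edge[OF q(1) aL(1)] q unfolding a_def by (cases "q = 0") auto
  then have "xs ! a = f m" using par aL by blast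
  moreover have "TE m (xs ! b)" using edge[OF aL(2) q(1)] q unfolding b_def by (cases "q = L - 1") auto
  then have "xs ! b = f m" using par aL by blast
  moreover have "a \<noteq> b" using xs(1) q unfolding a_def b_def L_def by auto
  ultimately show False using xs(2) aL unfolding L_def by (metis nth_eq_iff_index_eq)
qed

locale cons = gr + fixes k :: nat and c :: "nat \<Rightarrow> nat"
  assumes k3: "k \<ge> 3" and ck: "\<And>i. i < n \<Longrightarrow> c i < k"
    and propc: "\<And>u v. E u v \<Longrightarrow> c u \<noteq> c v"
begin

definition spine :: "nat \<Rightarrow> nat \<Rightarrow> nat" where "spine a i = Suc (a * n + i)"
definition leaf :: "nat \<Rightarrow> nat" where "leaf i = Suc (k * n + i)"
definition par :: "nat \<Rightarrow> nat" where
  "par v = (if v \<le> k * n then (if (v - 1) mod n = 0 then 0 else v - 1)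
            else spine (c (v - Suc (k * n))) (v - Suc (k * n)))"
definition TV :: "nat set" where "TV = {..k * n + n}"
definition TE :: "nat \<Rightarrow> nat \<Rightarrow> bool" where
  "TE u v \<longleftrightarrow> u \<in> TV \<and> v \<in> TV \<and> ((v \<noteq> 0 \<and> u = par v) \<or> (u \<noteq> 0 \<and> v = par u))"

lemma npos: "n > 0" using n2 by simp

lemma spine_le: "a < k \<Longrightarrow> i < n \<Longrightarrow> spine a i \<le> k * n"
proof -
  assume "a < k" "i < n"
  then have "a * n + n \<le> k * n" by (metis add.commute mult_Suc le_eq_less_or_eq mult_le_mono1 Suc_leI)
  then show ?thesis unfolding spine_def using \<open>i < n\<close> by linarith
qed

lemma spine_pos: "spine a i \<noteq> 0" unfolding spine_def by simp

lemma spine_inj: "i < n \<Longrightarrow> j < n \<Longrightarrow> spine a i = spine b j \<Longrightarrow> a = b \<and> i = j"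
proof -
  assume h: "i < n" "j < n" "spine a i = spine b j"
  then have e: "a * n + i = b * n + j" unfolding spine_def by simp
  have "(a * n + i) div n = a" "(b * n + j) div n = b" using h npos by auto
  moreover have "(a * n + i) mod n = i" "(b * n + j) mod n = j" using h by auto
  ultimately show ?thesis using e by metis
qed

lemma leaf_gt: "leaf i > k * n" unfolding leaf_def by simp

lemma par_spine: "a < k \<Longrightarrow> Suc i < n \<Longrightarrow> par (spine a (Suc i)) = spine a i"
proof -
  assume h: "a < k" "Suc i < n"
  have le: "spine a (Suc i) \<le> k * n" using spine_le h by blast
  have "(spine a (Suc i) - 1) mod n = Suc i" unfolding spine_def using h by simp
  then show ?thesis unfolding par_def using le h by (simp add: spine_def)
qed

lemma par_spine0: "a < k \<Longrightarrow> par (spine a 0) = 0"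
proof -
  assume h: "a < k"
  have le: "spine a 0 \<le> k * n" using spine_le h npos by blast
  then show ?thesis unfolding par_def by (simp add: spine_def)
qed

lemma par_leaf: "par (leaf i) = spine (c i) i"
  unfolding par_def leaf_def by simp

lemma par_lt: assumes "v \<in> TV" "v \<noteq> 0" shows "par v < v" "par v \<in> TV"
proof -
  have "par v < v"
  proof (cases "v \<le> k * n")
    case True then show ?thesis unfolding par_def using assms by auto
  next
    case False
    define i where "i = v - Suc (k * n)"
    have v: "v = leaf i" unfolding leaf_def i_def using False by simp
    have "i < n" using assms(1) False unfolding TV_def i_def by auto
    then have "spine (c i) i \<le> k * n" using spine_le ck by blast
    then show ?thesis using v par_leaf leaf_gt by (metis le_less_trans)
  qed
  then show "par v < v" "par v \<in> TV" using assms unfolding TV_def by auto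
qed

lemma TE_cases: "TE u v \<Longrightarrow> (u = par v \<and> u < v) \<or> (v = par u \<and> v < u)"
  unfolding TE_def using par_lt by blast

lemma TE_sym: "TE u v \<Longrightarrow> TE v u" unfolding TE_def by blast

lemma irrT: "\<not> TE v v" using TE_cases[of v v] by auto
lemma TE_V: "TE u v \<Longrightarrow> u \<in> TV \<and> v \<in> TV" unfolding TE_def by blast

lemma simple: "simple_graph TV TE"
  unfolding simple_graph_def using TE_sym irrT TE_V by (auto simp: TV_def)

lemma to_root: "v \<in> TV \<Longrightarrow> (\<lambda>x y. TE x y \<and> x \<in> TV \<and> y \<in> TV)\<^sup>*\<^sup>* v 0"
proof (induction v rule: less_induct)
  case (less v)
  show ?case
  proof (cases "v = 0")
    case True then show ?thesis by simp
  next
    case False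
    have "TE v (par v)" unfolding TE_def using less.prems False par_lt by auto
    moreover have "(\<lambda>x y. TE x y \<and> x \<in> TV \<and> y \<in> TV)\<^sup>*\<^sup>* (par v) 0"
      using less.IH par_lt less.prems False by blast
    ultimately show ?thesis using less.prems par_lt[OF less.prems False]
      converse_rtranclp_into_rtranclp[of "\<lambda>x y. TE x y \<and> x \<in> TV \<and> y \<in> TV" v "par v" 0] by blast
  qed
qed

lemma connT: "connected_graph TV TE"
  unfolding connected_graph_def
proof (intro ballI)
  fix u v assume uv: "u \<in> TV" "v \<in> TV"
  let ?R = "\<lambda>x y. TE x y \<and> x \<in> TV \<and> y \<in> TV"
  have "?R\<^sup>*\<^sup>* 0 v"
  proof -
    have "?R\<inverse>\<inverse>\<^sup>*\<^sup>* 0 v" using rtranclp_converseI[OF to_root[OF uv(2)]] .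
    moreover have "?R\<inverse>\<inverse> = ?R" using TE_sym by (intro ext) auto
    ultimately show ?thesis by simp
  qed
  then show "?R\<^sup>*\<^sup>* u v" using to_root[OF uv(1)] by (meson rtranclp_trans)
qed

lemma treeT: "is_tree TV TE"
  unfolding is_tree_def using simple connT acyc_par[of TE par TV] TE_cases
  unfolding TV_def by auto

lemma deg: "\<forall>v\<in>TV. degree TV TE v \<le> k"
proof
  fix v assume vV: "v \<in> TV"
  show "degree TV TE v \<le> k"
  proof (cases "v = 0")
    case True
    have "{u\<in>TV. TE v u} \<subseteq> (\<lambda>a. spine a 0) ` {..<k}"
    proof
      fix u assume u: "u \<in> {u\<in>TV. TE v u}"
      then have u0: "u \<noteq> 0" "par u = 0" "u \<in> TV" using True unfolding TE_def by (auto simp del: par_def)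
      have le: "u \<le> k * n"
      proof (rule ccontr)
        assume "\<not> u \<le> k * n"
        then have "par u = spine (c (u - Suc (k * n))) (u - Suc (k * n))" unfolding par_def by simp
        then show False using u0 spine_pos by simp
      qed
      have md: "(u - 1) mod n = 0"
      proof (rule ccontr)
        assume "(u - 1) mod n \<noteq> 0"
        then have "par u = u - 1" unfolding par_def using le by simp
        then have "u = 1" using u0 by simp
        then show False using \<open>(u - 1) mod n \<noteq> 0\<close> by simp
      qed
      define a where "a = (u - 1) div n"
      have "u - 1 = a * n" unfolding a_def using md div_mult_mod_eq[of "u - 1" n] by simp
      then have "u = spine a 0" unfolding spine_def using u0 by simp
      moreover have "a < k"
      proof -
        have "a * n < k * n" using \<open>u - 1 = a * n\<close> le u0 by linarith
        then show ?thesis by simp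
      qed
      ultimately show "u \<in> (\<lambda>a. spine a 0) ` {..<k}" by blast
    qed
    then have "card {u\<in>TV. TE v u} \<le> card ((\<lambda>a. spine a 0) ` {..<k})" by (intro card_mono) auto
    also have "\<dots> \<le> card {..<k}" by (rule card_image_le) simp
    finally show ?thesis unfolding degree_def by simp
  next
    case False
    have "{u\<in>TV. TE v u} \<subseteq> {par v, Suc v, leaf ((v - 1) mod n)}"
    proof
      fix u assume u: "u \<in> {u\<in>TV. TE v u}"
      show "u \<in> {par v, Suc v, leaf ((v - 1) mod n)}"
      proof (cases "u = par v")
        case True then show ?thesis by simp
      next
        case nu: False
        then have vu: "v = par u" "u \<noteq> 0" "u \<in> TV" using u unfolding TE_def by auto
        show ?thesis
        proof (cases "u \<le> k * n")
          case True
          then have "par u = 0 \<or> par u = u - 1" unfolding par_def by simp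
          then have "u = Suc v" using vu False by auto
          then show ?thesis by simp
        next
          case gt: False
          define i where "i = u - Suc (k * n)"
          have ul: "u = leaf i" unfolding leaf_def i_def using gt by simp
          have "i < n" using vu(3) gt unfolding TV_def i_def by auto
          have "v = Suc (c i * n + i)" using vu(1) ul par_leaf spine_def by simp
          then have "(v - 1) mod n = i" using \<open>i < n\<close> by simp
          then show ?thesis using ul by simp
        qed
      qed
    qed
    then have "card {u\<in>TV. TE v u} \<le> card {par v, Suc v, leaf ((v - 1) mod n)}" by (intro card_mono) auto
    also have "\<dots> \<le> 3" by (auto simp: card_insert_if)
    finally show ?thesis unfolding degree_def using k3 by simp
  qed
qed

definition dn :: "nat \<Rightarrow> nat \<Rightarrow> nat list" where "dn a i = map (spine a) (rev [0..<Suc i]) @ [0]"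
definition lp :: "nat \<Rightarrow> nat list" where "lp i = leaf i # dn (c i) i"

fun pp :: "hat_vertex \<Rightarrow> nat set" where
  "pp (HP i) = {leaf i}"
| "pp (HPQ i) = set (lp i)"
| "pp (HPE i j) = set (lp i) \<union> set (lp j)"

lemma set_dn: "set (dn a i) = insert 0 (spine a ` {..i})"
proof -
  have e: "set (rev [0..<Suc i]) = {..i}" by auto
  have "set (dn a i) = spine a ` set (rev [0..<Suc i]) \<union> {0}"
    by (simp only: dn_def set_append set_map list.set)
  then show ?thesis using e by auto
qed

lemma dn_Suc: "dn a (Suc i) = spine a (Suc i) # dn a i"
  unfolding dn_def by simp

lemma dn_succ: "a < k \<Longrightarrow> i < n \<Longrightarrow> successively TE (dn a i)"
proof (induction i)
  case 0
  have "TE (spine a 0) 0" unfolding TE_def using par_spine0[OF 0(1)] spine_le[OF 0(1) npos] spine_pos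
    by (auto simp: TV_def)
  then show ?case by (simp add: dn_def)
next
  case (Suc i)
  have "TE (spine a (Suc i)) (spine a i)" unfolding TE_def
    using par_spine[OF Suc.prems] spine_le[OF Suc.prems(1), of "Suc i"] spine_le[OF Suc.prems(1), of i] Suc.prems(2) spine_pos
    by (auto simp: TV_def)
  moreover have "hd (dn a i) = spine a i" unfolding dn_def by simp
  ultimately show ?case using Suc by (simp add: dn_Suc successively_Cons)
qed

lemma dn_distinct: "distinct (dn a i)"
proof -
  have "distinct (map (spine a) (rev [0..<Suc i]))" by (auto simp: distinct_map inj_on_def spine_def)
  moreover have "0 \<notin> spine a ` {..i}" by (auto simp: spine_def)
  ultimately show ?thesis unfolding dn_def by auto
qed

lemma leaf_not_dn: "a < k \<Longrightarrow> i < n \<Longrightarrow> leaf j \<notin> set (dn a i)"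
proof
  assume a: "a < k" "i < n" and "leaf j \<in> set (dn a i)"
  then obtain t where t: "t \<le> i" "leaf j = spine a t" unfolding set_dn by (auto simp: leaf_def)
  have "spine a t \<le> k * n" using spine_le[OF a(1)] t a(2) by simp
  then show False using t leaf_gt[of j] by simp
qed

lemma lp_spath: assumes "i < n" shows "tr.spath TV TE (lp i)"
proof -
  interpret tr TV TE by (rule tr.intro[OF treeT])
  have ci: "c i < k" using ck assms by blast
  have "distinct (lp i)" unfolding lp_def using dn_distinct leaf_not_dn[OF ci assms] by simp
  moreover have "set (lp i) \<subseteq> TV"
  proof -
    have "leaf i \<in> TV" unfolding TV_def leaf_def using assms by simp
    moreover have "spine (c i) t \<in> TV" if "t \<le> i" for t using spine_le[OF ci, of t] that assms unfolding TV_def by simp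
    moreover have "(0::nat) \<in> TV" unfolding TV_def by simp
    ultimately show ?thesis unfolding lp_def by (auto simp: set_dn)
  qed
  moreover have "successively TE (lp i)"
  proof -
    have "TE (leaf i) (spine (c i) i)" unfolding TE_def using par_leaf spine_le[OF ci assms] leaf_gt assms
      by (auto simp: TV_def leaf_def)
    then show ?thesis unfolding lp_def using dn_succ[OF ci assms]
      by (simp add: successively_Cons dn_def)
  qed
  ultimately show ?thesis unfolding spath_def lp_def by simp
qed

lemma leaf_in_lp: "i < n \<Longrightarrow> j < n \<Longrightarrow> leaf i \<in> set (lp j) \<longleftrightarrow> i = j"
  unfolding lp_def using leaf_not_dn[OF ck] by (auto simp: leaf_def)

lemma zero_lp: "0 \<in> set (lp j)" unfolding lp_def dn_def by simp

lemma lp_disj: assumes "i < n" "j < n" "c i \<noteq> c j" shows "set (lp i) \<inter> set (lp j) \<subseteq> {0}"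
proof
  fix x assume x: "x \<in> set (lp i) \<inter> set (lp j)"
  have ij: "i \<noteq> j" using assms by blast
  have "x \<noteq> leaf i" using x leaf_in_lp assms ij by blast
  moreover have "x \<noteq> leaf j" using x leaf_in_lp assms ij by blast
  ultimately have "x \<in> set (dn (c i) i)" "x \<in> set (dn (c j) j)" using x unfolding lp_def by auto
  then show "x \<in> {0}"
  proof (cases "x = 0")
    case False
    then obtain t u where tu: "t \<le> i" "u \<le> j" "x = spine (c i) t" "x = spine (c j) u"
      using \<open>x \<in> set (dn (c i) i)\<close> \<open>x \<in> set (dn (c j) j)\<close> unfolding set_dn by auto
    then have "c i = c j" using spine_inj[of t u "c i" "c j"] assms(1,2) by simp
    then show ?thesis using assms(3) by blast
  qed simp
qed

lemma hatV_cases: "x \<in> hat_V n E \<Longrightarrow> (\<exists>i<n. x = HP i) \<or> (\<exists>i j. x = HPE i j \<and> i < j \<and> j < n \<and> E i j) \<or> (\<exists>i<n. x = HPQ i)"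
  unfolding hat_V_def by auto

lemma adj_sym: "hat_adj x y = hat_adj y x" unfolding hat_adj_def by blast

lemma last_lp: "last (lp i) = 0" unfolding lp_def dn_def by simp

lemma pp_path: assumes "x \<in> hat_V n E" shows "is_path_set TV TE (pp x)"
proof -
  interpret tr TV TE by (rule tr.intro[OF treeT])
  have "\<exists>xs. spath xs \<and> pp x = set xs"
  proof -
    consider (P) i where "i < n" "x = HP i" | (Q) i where "i < n" "x = HPQ i"
      | (R) i j where "x = HPE i j" "i < j" "j < n" "E i j"
      using hatV_cases[OF assms] by blast
    then show ?thesis
    proof cases
      case P
      have "spath [leaf i]" unfolding spath_def using P by (simp add: TV_def leaf_def)
      then show ?thesis using P by (intro exI[of _ "[leaf i]"]) simp
    next
      case Q then show ?thesis using lp_spath by (intro exI[of _ "lp i"]) simp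
    next
      case R
      have ij: "i < n" "j < n" "c i \<noteq> c j" using R propc by auto
      note si = lp_spath[OF ij(1)] and sj = lp_spath[OF ij(2)]
      have sj': "spath (rev (lp j))" using sj spath_rev by simp
      have nej: "lp j \<noteq> []" unfolding lp_def by simp
      have hdj: "hd (rev (lp j)) = 0" using nej last_lp by (simp add: hd_rev)
      have "set (lp i) \<inter> set (rev (lp j)) \<subseteq> {hd (rev (lp j))}" using lp_disj[OF ij] hdj by simp
      then have c: "spath (lp i @ tl (rev (lp j)))" using cat(1)[OF si sj'] last_lp hdj by simp
      have "set (rev (lp j)) = insert 0 (set (tl (rev (lp j))))" using hdj nej
        by (metis Nil_is_rev_conv list.collapse list.simps(15))
      then have "set (lp i @ tl (rev (lp j))) = set (lp i) \<union> set (lp j)" using zero_lp[of i] by auto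
      then show ?thesis using c R by (intro exI[of _ "lp i @ tl (rev (lp j))"]) simp
    qed
  qed
  then show ?thesis unfolding is_path_set_def spath_walk by blast
qed

lemma zero_pp: "\<not> isP x \<Longrightarrow> 0 \<in> pp x"
  by (cases x) (auto simp: isP_def zero_lp)

lemma adj_HP: assumes "i < n" "y \<in> hat_V n E" "y \<noteq> HP i"
  shows "hat_adj (HP i) y \<longleftrightarrow> leaf i \<in> pp y"
  using hatV_cases[OF assms(2)] assms leaf_in_lp by (auto simp: leaf_def)

lemma pp_adj: assumes "x \<in> hat_V n E" "y \<in> hat_V n E" "x \<noteq> y"
  shows "hat_adj x y \<longleftrightarrow> pp x \<inter> pp y \<noteq> {}"
proof (cases "isP x")
  case True
  then obtain i where i: "x = HP i" "i < n" using hatV_cases[OF assms(1)] by (auto simp: isP_def)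
  then show ?thesis using adj_HP[OF i(2) assms(2)] assms(3) by auto
next
  case xn: False
  show ?thesis
  proof (cases "isP y")
    case True
    then obtain i where i: "y = HP i" "i < n" using hatV_cases[OF assms(2)] by (auto simp: isP_def)
    then show ?thesis using adj_HP[OF i(2) assms(1)] assms(3) adj_sym by auto
  next
    case False
    then show ?thesis using clique_adj[OF xn False assms(3)] zero_pp xn by blast
  qed
qed

lemma lower: "in_VPT_class k (hat_V n E) hat_adj"
  unfolding in_VPT_class_def
  using treeT deg pp_path pp_adj by blast

end




context gr begin

lemma col_ex: "\<exists>c. (\<forall>v\<in>{..<n}. c v < chromatic_number {..<n} E) \<and> (\<forall>u\<in>{..<n}. \<forall>v\<in>{..<n}. E u v \<longrightarrow> c u \<noteq> c v)"
proof -
  have "\<exists>c :: nat \<Rightarrow> nat. (\<forall>v\<in>{..<n}. c v < n) \<and> (\<forall>u\<in>{..<n}. \<forall>v\<in>{..<n}. E u v \<longrightarrow> c u \<noteq> c v)"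
    using irrE by (intro exI[of _ id]) auto
  then have ex: "\<exists>k. \<exists>c :: nat \<Rightarrow> nat. (\<forall>v\<in>{..<n}. c v < k) \<and> (\<forall>u\<in>{..<n}. \<forall>v\<in>{..<n}. E u v \<longrightarrow> c u \<noteq> c v)"
    by blast
  show ?thesis unfolding chromatic_number_def using LeastI_ex[OF ex] .
qed

lemma lower_k: assumes "k \<ge> 3" "chromatic_number {..<n} E \<le> k" shows "in_VPT_class k (hat_V n E) hat_adj"
proof -
  obtain c where c: "\<forall>v\<in>{..<n}. c v < chromatic_number {..<n} E" "\<forall>u\<in>{..<n}. \<forall>v\<in>{..<n}. E u v \<longrightarrow> c u \<noteq> c v"
    using col_ex by blast
  interpret cons n E k c
  proof
    show "3 \<le> k" by fact
    show "\<And>i. i < n \<Longrightarrow> c i < k" using c(1) assms(2) by (meson lessThan_iff less_le_trans)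
    show "\<And>u v. E u v \<Longrightarrow> c u \<noteq> c v" using c(2) inE by blast
  qed
  show ?thesis by (rule lower)
qed

end

theorem claim2:
  fixes n h :: nat and E :: "nat \<Rightarrow> nat \<Rightarrow> bool"
  assumes "n \<ge> 2"
    and "simple_graph {..<n} E"
    and "connected_graph {..<n} E"
    and "h \<ge> 4"
  shows "(in_VPT_class h (hat_V n E) hat_adj \<and> \<not> in_VPT_class (h - 1) (hat_V n E) hat_adj)
         \<longleftrightarrow> chromatic_number {..<n} E = h"
proof -
  interpret gr n E using assms by unfold_locales
  show ?thesis
  proof
    assume a: "in_VPT_class h (hat_V n E) hat_adj \<and> \<not> in_VPT_class (h - 1) (hat_V n E) hat_adj"
    have "chromatic_number {..<n} E \<le> h" using upper a by blast
    moreover have "3 \<le> h - 1" using assms(4) by simp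
    then have "\<not> chromatic_number {..<n} E \<le> h - 1" using lower_k[of "h - 1"] a by blast
    ultimately show "chromatic_number {..<n} E = h" by linarith
  next
    assume a: "chromatic_number {..<n} E = h"
    have "in_VPT_class h (hat_V n E) hat_adj" using lower_k[of h] a assms(4) by auto
    moreover have "\<not> in_VPT_class (h - 1) (hat_V n E) hat_adj"
      using upper[of "h - 1"] a assms(4) by auto
    ultimately show "in_VPT_class h (hat_V n E) hat_adj \<and> \<not> in_VPT_class (h - 1) (hat_V n E) hat_adj" ..
  qed
qed


end
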